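(* If $\nu>-1$ and $x\in[0,\alpha_{\nu,1})$, then $$d_\nu(x)\leq\frac{x^\nu e^{-\frac{3x^2}{4(\nu+1)}}}{2^\nu\Gamma(\nu+1)}.$$
   Context: $J_\nu$ denotes the Bessel function of the first kind of order $\nu$. The Dini function is $d_\nu(x)=(1-\nu)J_\nu(x)+xJ_\nu'(x)$, and $\alpha_{\nu,1}$ denotes its first positive zero. *)

theory Defs
  imports "HOL-Analysis.Analysis"
begin

definition besselJ :: "real \<Rightarrow> real \<Rightarrow> real" where
  "besselJ \<nu> x = (\<Sum>k. (-1) ^ k / (fact k * Gamma (real k + \<nu> + 1)) * (x / 2) powr (2 * real k + \<nu>))"

definition dini :: "real \<Rightarrow> real \<Rightarrow> real" where
  "dini \<nu> x = (1 - \<nu>) * besselJ \<nu> x + x * deriv (besselJ \<nu>) x"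

definition alpha1 :: "real \<Rightarrow> real" where
  "alpha1 \<nu> = Inf {x. 0 < x \<and> dini \<nu> x = 0}"

end

theory Submission
  imports Defs
begin

lemma Gamma_plus1_pos: "(z::real) > 0 \<Longrightarrow> Gamma (z + 1) = z * Gamma z"
  by (rule Gamma_plus1) (auto dest: nonpos_Ints_nonpos)

definition bc :: "real \<Rightarrow> nat \<Rightarrow> real" where
  "bc \<mu> k = (-1)^k / (fact k * Gamma (real k + \<mu> + 1))"

definition SS :: "real \<Rightarrow> real \<Rightarrow> real" where
  "SS \<mu> t = (\<Sum>k. bc \<mu> k * t^k)"

lemma bc_Suc: assumes "\<mu> > -1"
  shows "bc \<mu> (Suc n) = - bc \<mu> n / ((real n + 1) * (real n + \<mu> + 1))"
proof -
  have g: "Gamma (real (Suc n) + \<mu> + 1) = (real n + \<mu> + 1) * Gamma (real n + \<mu> + 1)"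
    using Gamma_plus1_pos[of "real n + \<mu> + 1"] assms by (simp add: algebra_simps)
  have "Gamma (real n + \<mu> + 1) > 0" using assms by simp
  then show ?thesis unfolding bc_def g using assms
    by (simp add: field_simps)
qed

lemma summable_bc: assumes "\<mu> > -1" shows "summable (\<lambda>k. bc \<mu> k * t^k)"
proof (rule summable_ratio_test[where c="1/2" and N="nat \<lceil>2*\<bar>t\<bar>\<rceil> + 1"])
  fix n assume n: "n \<ge> nat \<lceil>2*\<bar>t\<bar>\<rceil> + 1"
  have n1: "real n \<ge> 1" and n2: "real n \<ge> 2*\<bar>t\<bar>" using n by linarith+
  have p1: "real n + \<mu> + 1 \<ge> 1" using n1 assms by linarith
  have p: "(real n + 1) * (real n + \<mu> + 1) \<ge> 2*\<bar>t\<bar>"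
    using mult_mono[OF _ p1, of "2*\<bar>t\<bar>" "real n + 1"] n2 by linarith
  have pp: "(real n + 1) * (real n + \<mu> + 1) > 0" using p1 by simp
  have "norm (bc \<mu> (Suc n) * t ^ Suc n) = \<bar>bc \<mu> n\<bar> * \<bar>t\<bar>^n * (\<bar>t\<bar> / ((real n + 1) * (real n + \<mu> + 1)))"
    using pp p1 by (simp add: bc_Suc[OF assms] abs_mult power_abs abs_divide)
  also have "\<dots> \<le> \<bar>bc \<mu> n\<bar> * \<bar>t\<bar>^n * (1/2)"
    by (rule mult_left_mono) (use p pp in \<open>auto simp: divide_simps\<close>)
  finally show "norm (bc \<mu> (Suc n) * t ^ Suc n) \<le> 1/2 * norm (bc \<mu> n * t ^ n)"
    by (simp add: abs_mult power_abs)
qed simp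

lemma diffs_bc: assumes "\<mu> > -1" shows "diffs (bc \<mu>) = (\<lambda>n. - bc (\<mu>+1) n)"
proof
  fix n
  have g: "Gamma (real n + (\<mu> + 1) + 1) = (real n + \<mu> + 1) * Gamma (real n + \<mu> + 1)"
    using Gamma_plus1_pos[of "real n + \<mu> + 1"] assms by (simp add: algebra_simps)
  have "real n + \<mu> + 1 > 0" using assms by simp
  then have "real (Suc n) * (- bc \<mu> n / ((real n + 1) * (real n + \<mu> + 1))) = - (bc \<mu> n / (real n + \<mu> + 1))"
  proof -
    have "(real n + 1) \<noteq> 0" by simp
    then have "((real n + 1) * bc \<mu> n) / ((real n + 1) * (real n + \<mu> + 1)) = bc \<mu> n / (real n + \<mu> + 1)"
      by (rule mult_divide_mult_cancel_left)
    moreover have "real (Suc n) = real n + 1" by simp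
    ultimately show ?thesis by (metis minus_divide_left mult_minus_right times_divide_eq_right)
  qed
  also have "bc \<mu> n / (real n + \<mu> + 1) = bc (\<mu>+1) n"
    unfolding bc_def g by (simp add: field_simps)
  finally show "diffs (bc \<mu>) n = - bc (\<mu>+1) n"
    unfolding diffs_def bc_Suc[OF assms] by simp
qed

lemma SS_deriv: assumes "\<mu> > -1" shows "(SS \<mu> has_real_derivative - SS (\<mu>+1) t) (at t)"
proof -
  have "((\<lambda>t. \<Sum>n. bc \<mu> n * t^n) has_real_derivative (\<Sum>n. diffs (bc \<mu>) n * t^n)) (at t)"
    by (rule termdiffs_strong[OF summable_bc[OF assms, of "\<bar>t\<bar>+1"]]) simp
  moreover have "(\<Sum>n. diffs (bc \<mu>) n * t^n) = - SS (\<mu>+1) t"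
    unfolding diffs_bc[OF assms] SS_def using suminf_minus[OF summable_bc[of "\<mu>+1" t]] assms by simp
  ultimately show ?thesis unfolding SS_def[abs_def] by simp
qed

lemma SS_0: assumes "\<mu> > -1" shows "SS \<mu> 0 = 1 / Gamma (\<mu> + 1)"
proof -
  have "SS \<mu> 0 = (\<Sum>k. bc \<mu> k * 0^k)" by (simp add: SS_def)
  also have "\<dots> = bc \<mu> 0" by (rule powser_zero)
  finally show ?thesis by (simp add: bc_def)
qed

lemma bc_rec0: assumes "\<mu> > 0" shows "\<mu> * bc \<mu> 0 - bc (\<mu>-1) 0 = 0"
proof -
  have g: "Gamma (\<mu> + 1) = \<mu> * Gamma \<mu>" using Gamma_plus1_pos[OF assms] .
  have "Gamma \<mu> > 0" using assms by simp
  then show ?thesis unfolding bc_def using g assms by simp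
qed

lemma bc_recSuc: assumes "\<mu> > 0" shows "\<mu> * bc \<mu> (Suc k) - bc (\<mu>-1) (Suc k) = bc (\<mu>+1) k"
proof -
  define g where "g = Gamma (real k + \<mu> + 1)"
  have gp: "g > 0" using assms by (simp add: g_def)
  have g1: "Gamma (real (Suc k) + \<mu> + 1) = (real k + \<mu> + 1) * g"
    using Gamma_plus1_pos[of "real k + \<mu> + 1"] assms by (simp add: g_def algebra_simps)
  have g2: "Gamma (real (Suc k) + (\<mu> - 1) + 1) = g" by (simp add: g_def algebra_simps)
  have g3: "Gamma (real k + (\<mu> + 1) + 1) = (real k + \<mu> + 1) * g"
    using g1 by (simp add: algebra_simps)
  have f: "fact (Suc k) = (real k + 1) * fact k" by (simp add: algebra_simps)
  have fp: "(fact k :: real) > 0" by simp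
  have p: "real k + \<mu> + 1 > 0" using assms by simp
  have k1: "real k + 1 > 0" by simp
  have "\<mu> * ((-1) / ((real k + 1) * fact k * ((real k + \<mu> + 1) * g))) - (-1) / ((real k + 1) * fact k * g)
      = 1 / (fact k * ((real k + \<mu> + 1) * g))"
  proof -
    have L: "\<And>a b F g::real. a > 0 \<Longrightarrow> b > 0 \<Longrightarrow> F > 0 \<Longrightarrow> g > 0 \<Longrightarrow>
      (b - a) * ((-1) / (a * F * (b * g))) - (-1) / (a * F * g) = 1 / (F * (b * g))"
      by (simp add: field_simps)
    have "\<mu> = (real k + \<mu> + 1) - (real k + 1)" by simp
    then show ?thesis using L[OF k1 p fp gp] by simp
  qed
  then have "(-1)^k * (\<mu> * ((-1) / ((real k + 1) * fact k * ((real k + \<mu> + 1) * g))) - (-1) / ((real k + 1) * fact k * g))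
      = (-1)^k * (1 / (fact k * ((real k + \<mu> + 1) * g)))" by simp
  then show ?thesis unfolding bc_def g1 g2 g3 f
    by (simp add: algebra_simps)
qed

lemma SS_rec: assumes "\<mu> > 0" shows "t * SS (\<mu>+1) t = \<mu> * SS \<mu> t - SS (\<mu>-1) t"
proof -
  define d where "d j = (\<mu> * bc \<mu> j - bc (\<mu>-1) j) * t^j" for j
  have s1: "summable (\<lambda>j. bc \<mu> j * t^j)" "summable (\<lambda>j. bc (\<mu>-1) j * t^j)"
    using summable_bc assms by auto
  have "(\<lambda>j. \<mu> * (bc \<mu> j * t^j) - bc (\<mu>-1) j * t^j) sums (\<mu> * SS \<mu> t - SS (\<mu>-1) t)"
    unfolding SS_def by (intro sums_diff sums_mult summable_sums s1)
  then have "d sums (\<mu> * SS \<mu> t - SS (\<mu>-1) t)"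
    unfolding d_def by (simp add: algebra_simps)
  then have "(\<lambda>k. d (Suc k)) sums (\<mu> * SS \<mu> t - SS (\<mu>-1) t - d 0)"
    by (subst sums_Suc_iff) simp
  moreover have "d 0 = 0" unfolding d_def using bc_rec0[OF assms] by simp
  moreover have "(\<lambda>k. d (Suc k)) = (\<lambda>k. t * (bc (\<mu>+1) k * t^k))"
    unfolding d_def bc_recSuc[OF assms] by (simp add: algebra_simps)
  ultimately have "(\<lambda>k. t * (bc (\<mu>+1) k * t^k)) sums (\<mu> * SS \<mu> t - SS (\<mu>-1) t)" by simp
  moreover have "(\<lambda>k. t * (bc (\<mu>+1) k * t^k)) sums (t * SS (\<mu>+1) t)"
    unfolding SS_def by (intro sums_mult summable_sums summable_bc) (use assms in simp)
  ultimately show ?thesis using sums_unique2 by blast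
qed

lemma besselJ_SS: assumes "\<nu> > -1" "x > 0"
  shows "besselJ \<nu> x = (x/2) powr \<nu> * SS \<nu> (x^2/4)"
proof -
  have e: "(x/2) powr (2 * real k + \<nu>) = (x/2) powr \<nu> * (x^2/4)^k" for k
  proof -
    have "(x/2) powr (2 * real k) = (x/2) ^ (2*k)"
      using assms by (simp add: powr_realpow[symmetric])
    also have "\<dots> = (x^2/4)^k" by (simp add: power_mult power_divide)
    finally show ?thesis by (simp add: powr_add)
  qed
  have "besselJ \<nu> x = (\<Sum>k. (x/2) powr \<nu> * (bc \<nu> k * (x^2/4)^k))"
    unfolding besselJ_def e bc_def by (simp add: algebra_simps)
  also have "\<dots> = (x/2) powr \<nu> * SS \<nu> (x^2/4)"
    unfolding SS_def by (rule suminf_mult[OF summable_bc[OF assms(1)]])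
  finally show ?thesis .
qed

lemma SS_cont: "\<mu> > -1 \<Longrightarrow> isCont (SS \<mu>) t"
  using SS_deriv DERIV_isCont by blast

lemma dini_SS: assumes "\<nu> > -1" "x > 0"
  shows "dini \<nu> x = (x/2) powr \<nu> * (SS \<nu> (x^2/4) - 2 * (x^2/4) * SS (\<nu>+1) (x^2/4))"
proof -
  define f where "f y = (y/2) powr \<nu> * SS \<nu> (y^2/4)" for y
  define D where "D = \<nu> * (x/2) powr (\<nu> - 1) * (1/2) * SS \<nu> (x^2/4) + (x/2) powr \<nu> * (- SS (\<nu>+1) (x^2/4) * (2*x/4))"
  have d1: "((\<lambda>y. y/2) has_real_derivative 1/2) (at x)" by (auto intro!: derivative_eq_intros)
  have d2: "((\<lambda>y. (y/2) powr \<nu>) has_real_derivative \<nu> * (x/2) powr (\<nu> - 1) * (1/2)) (at x)"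
    using DERIV_fun_powr[OF d1, of \<nu>] assms by simp
  have d3: "((\<lambda>y. y^2/4) has_real_derivative 2*x/4) (at x)" by (auto intro!: derivative_eq_intros)
  have d4: "((\<lambda>y. SS \<nu> (y^2/4)) has_real_derivative - SS (\<nu>+1) (x^2/4) * (2*x/4)) (at x)"
    using DERIV_chain2[OF SS_deriv[OF assms(1)] d3] .
  have df: "(f has_real_derivative D) (at x)" unfolding f_def[abs_def] D_def
    using DERIV_mult[OF d2 d4] by (simp add: algebra_simps)
  have "(besselJ \<nu> has_real_derivative D) (at x)"
  proof (rule has_field_derivative_transform_within_open[OF df, of "{0<..}"])
    show "f y = besselJ \<nu> y" if "y \<in> {0<..}" for y using besselJ_SS[OF assms(1)] that by (simp add: f_def)
  qed (use assms in auto)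
  then have dd: "deriv (besselJ \<nu>) x = D" by (rule DERIV_imp_deriv)
  have pw: "x * (x/2) powr (\<nu> - 1) = 2 * (x/2) powr \<nu>"
    using assms by (simp add: powr_diff field_simps)
  show ?thesis unfolding dini_def dd besselJ_SS[OF assms] D_def
    using pw by (simp add: algebra_simps power2_eq_square)
qed

lemma pos_lemma:
  fixes f f' :: "real \<Rightarrow> real"
  assumes d: "\<And>s. (f has_real_derivative f' s) (at s)" and f0: "f 0 > 0" and T: "T \<ge> 0"
    and z: "\<And>z. 0 < z \<Longrightarrow> z \<le> T \<Longrightarrow> f z = 0 \<Longrightarrow> f' z > 0"
  shows "\<forall>s\<in>{0..T}. f s > 0"
proof (rule ccontr)
  assume "\<not> ?thesis"
  then obtain s0 where s0: "s0 \<in> {0..T}" "f s0 \<le> 0" by auto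
  define K where "K = {s\<in>{0..T}. f s \<le> 0}"
  have cont: "continuous_on UNIV f" using d by (meson DERIV_isCont continuous_at_imp_continuous_on)
  have "closed {s. f s \<le> 0}" by (rule closed_Collect_le[OF cont]) simp
  moreover have "K = {0..T} \<inter> {s. f s \<le> 0}" unfolding K_def by auto
  ultimately have cK: "closed K" by (simp add: closed_Int)
  have nK: "K \<noteq> {}" using s0 by (auto simp: K_def)
  have bK: "bdd_below K" unfolding K_def by (rule bdd_belowI[of _ 0]) auto
  define z where "z = Inf K"
  have zK: "z \<in> K" unfolding z_def by (rule closed_contains_Inf[OF nK bK cK])
  have zl: "\<And>w. w \<in> K \<Longrightarrow> z \<le> w" unfolding z_def by (rule cInf_lower[OF _ bK])
  have z0: "0 \<le> z" "z \<le> T" "f z \<le> 0" using zK by (auto simp: K_def)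
  have zpos: "z > 0" using z0 f0 by (metis order.not_eq_order_implies_strict not_le)
  have fz: "f z = 0"
  proof (rule ccontr)
    assume "f z \<noteq> 0"
    then have "f z < 0" using z0 by simp
    have "continuous_on {0..z} f" using continuous_on_subset[OF cont] by blast
    then obtain w where w: "0 \<le> w" "w \<le> z" "f w = 0"
      using IVT2'[of f z 0 0] z0 f0 by auto
    then have "w \<in> K" using z0 by (auto simp: K_def)
    then have "z \<le> w" by (rule zl)
    then show False using w \<open>f z < 0\<close> by simp
  qed
  have "f' z > 0" using z[OF zpos z0(2) fz] .
  then obtain d where dd: "d > 0" "\<And>h. h > 0 \<Longrightarrow> h < d \<Longrightarrow> f (z - h) < f z"
    using DERIV_pos_inc_left[OF d] by blast
  define h where "h = min (d/2) z"
  have h: "h > 0" "h < d" "h \<le> z" using dd zpos by (auto simp: h_def)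
  have "f (z - h) < 0" using dd(2)[OF h(1,2)] fz by simp
  then have "z - h \<in> K" using h z0 by (auto simp: K_def)
  then have "z \<le> z - h" by (rule zl)
  then show False using h by simp
qed

lemma SS_0_pos: "\<mu> > -1 \<Longrightarrow> SS \<mu> 0 > 0"
  by (simp add: SS_0)

lemma SS_step_pos:
  assumes "\<mu> > 0" "T \<ge> 0" "\<forall>s\<in>{0..T}. SS (\<mu>-1) s > 0"
  shows "\<forall>s\<in>{0..T}. SS \<mu> s > 0"
proof (rule pos_lemma[where f' = "\<lambda>s. - SS (\<mu>+1) s"])
  show "(SS \<mu> has_real_derivative - SS (\<mu>+1) s) (at s)" for s using SS_deriv assms by simp
  show "SS \<mu> 0 > 0" using SS_0_pos assms by simp
  fix z assume z: "0 < z" "z \<le> T" "SS \<mu> z = 0"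
  have "z * SS (\<mu>+1) z = - SS (\<mu>-1) z" using SS_rec[OF assms(1), of z] z by simp
  moreover have "SS (\<mu>-1) z > 0" using assms z by auto
  ultimately have "z * SS (\<mu>+1) z < 0" by simp
  then show "- SS (\<mu>+1) z > 0" using z by (simp add: mult_less_0_iff)
qed (use assms in auto)

lemma main_ineq:
  assumes nu: "\<nu> > -1" and T: "T \<ge> 0"
    and nz: "\<And>t. 0 < t \<Longrightarrow> t \<le> T \<Longrightarrow> SS \<nu> t - 2*t*SS (\<nu>+1) t \<noteq> 0"
  shows "SS \<nu> T - 2*T*SS (\<nu>+1) T \<le> exp (-(3/(\<nu>+1))*T) / Gamma (\<nu>+1)"
proof -
  define A where "A = SS \<nu>"
  define B where "B = SS (\<nu>+1)"
  define C where "C = SS (\<nu>+2)"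
  define D where "D = SS (\<nu>+3)"
  define G where "G t = A t - 2*t*B t" for t
  define c where "c = 3/(\<nu>+1)"
  have dA: "(A has_real_derivative - B t) (at t)" for t unfolding A_def B_def using SS_deriv nu by simp
  have dB: "(B has_real_derivative - C t) (at t)" for t unfolding B_def C_def using SS_deriv[of "\<nu>+1" t] nu
    by (simp add: add.assoc)
  have dC: "(C has_real_derivative - D t) (at t)" for t unfolding C_def D_def using SS_deriv[of "\<nu>+2" t] nu
    by (simp add: add.assoc)
  have dG: "(G has_real_derivative (-3 * B t + 2*t*C t)) (at t)" for t
  proof -
    have "((\<lambda>t. A t - 2*t*B t) has_real_derivative (- B t - (2 * B t + 2*t*(- C t)))) (at t)"
      using DERIV_diff[OF dA DERIV_mult[OF DERIV_cmult[OF DERIV_ident, of 2] dB], of t] by (simp add: algebra_simps)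
    then show ?thesis unfolding G_def[abs_def] by (simp add: algebra_simps)
  qed
  have rec: "t * C t = (\<nu>+1) * B t - A t" for t
    unfolding A_def B_def C_def using SS_rec[of "\<nu>+1" t] nu by (simp add: add.assoc)
  have A0: "A 0 = 1 / Gamma (\<nu>+1)" unfolding A_def using SS_0 nu by simp
  have Gpos: "\<forall>s\<in>{0..T}. G s > 0"
  proof (rule pos_lemma[OF dG _ T])
    show "G 0 > 0" using SS_0_pos nu by (simp add: G_def A_def)
  qed (use nz in \<open>auto simp: G_def A_def B_def\<close>)
  have Apos: "\<forall>s\<in>{0..T}. A s > 0"
  proof (rule pos_lemma[OF dA _ T])
    show "A 0 > 0" using SS_0_pos nu by (simp add: A_def)
    fix z assume z: "0 < z" "z \<le> T" "A z = 0"
    then have "G z > 0" using Gpos by auto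
    then have "-2*z*B z > 0" using z by (simp add: G_def)
    then show "- B z > 0" using z by (simp add: mult_less_0_iff zero_less_mult_iff)
  qed
  have Bpos: "\<forall>s\<in>{0..T}. B s > 0" unfolding B_def
    by (rule SS_step_pos) (use nu T Apos in \<open>auto simp: A_def\<close>)
  have e2: "\<nu>+2-1 = \<nu>+1" and e3: "\<nu>+3-1 = \<nu>+2" by simp_all
  have Cpos: "\<forall>s\<in>{0..T}. C s > 0" unfolding C_def
    using SS_step_pos[of "\<nu>+2" T] nu T Bpos unfolding e2 B_def by simp
  have Dpos: "\<forall>s\<in>{0..T}. D s > 0" unfolding D_def
    using SS_step_pos[of "\<nu>+3" T] nu T Cpos unfolding e3 C_def by simp
  have key: "(2*\<nu>-1) * C s \<le> 6 * B s" if s: "0 \<le> s" "s \<le> T" for s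
  proof -
    have Bs: "B s > 0" and Cs: "C s > 0" and Gs: "G s > 0" using s Bpos Cpos Gpos by auto
    consider "2*\<nu>-1 \<le> 0" | "2*\<nu>-1 > 0" "s \<ge> (2*\<nu>-1)/4" | "2*\<nu>-1 > 0" "s < (2*\<nu>-1)/4" by linarith
    then show ?thesis
    proof cases
      case 1
      then have "(2*\<nu>-1) * C s \<le> 0" using Cs by (simp add: mult_nonpos_nonneg)
      then show ?thesis using Bs by linarith
    next
      case 2
      have "(2*\<nu>-1)/4 > 0" using 2(1) by simp
      then have sp: "s > 0" using 2(2) by linarith
      have "s * C s < (\<nu>+1-2 * s) * B s" using rec[of s] Gs by (simp add: G_def algebra_simps)
      then have "(2*\<nu>-1) * (s * C s) \<le> (2*\<nu>-1) * ((\<nu>+1-2 * s) * B s)"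
        using 2 by (simp add: mult_left_mono)
      also have "\<dots> = ((2*\<nu>-1) * (\<nu>+1-2 * s)) * B s" by simp
      also have "\<dots> \<le> (6* s) * B s"
      proof (rule mult_right_mono)
        have "(2*\<nu>-1)*(\<nu>+1) \<le> (4*\<nu>+4) * s"
          using mult_left_mono[OF 2(2), of "4*\<nu>+4"] nu by (simp add: algebra_simps)
        then show "(2*\<nu>-1) * (\<nu>+1-2 * s) \<le> 6 * s" by (simp add: algebra_simps)
      qed (use Bs in simp)
      finally have "s * ((2*\<nu>-1) * C s) \<le> s * (6 * B s)" by (simp add: algebra_simps)
      then show ?thesis using sp by simp
    next
    case 3
    have Cdec: "C u \<le> C 0" if "0 \<le> u" "u \<le> s" for u
    proof (rule DERIV_nonpos_imp_nonincreasing[of 0 u C])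
      fix x assume x: "0 \<le> x" "x \<le> u"
      then have "D x > 0" using Dpos that s by auto
      then show "\<exists>y. (C has_real_derivative y) (at x) \<and> y \<le> 0" using dC[of x] by force
    qed (use that in simp)
    have Binc: "B 0 + 0 * C 0 \<le> B s + s * C 0"
    proof (rule DERIV_nonneg_imp_nondecreasing[of 0 s "\<lambda>u. B u + u * C 0"])
      fix u assume u: "0 \<le> u" "u \<le> s"
      have "((\<lambda>u. B u + u * C 0) has_real_derivative (- C u + C 0)) (at u)"
        using DERIV_add[OF dB[of u] DERIV_cmult_right[OF DERIV_ident, of "C 0"]] by simp
      moreover have "- C u + C 0 \<ge> 0" using Cdec u by simp
      ultimately show "\<exists>y. ((\<lambda>u. B u + u * C 0) has_real_derivative y) (at u) \<and> y \<ge> 0" by blast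
    qed (use s in simp)
    have C0p: "C 0 > 0" using Cpos T by auto
    have B0: "B 0 = (\<nu>+2) * C 0"
    proof -
      have eq: "\<nu>+1+1 = \<nu>+2" by simp
      have b: "B 0 = 1 / Gamma (\<nu>+2)" unfolding B_def using SS_0[of "\<nu>+1"] nu unfolding eq by simp
      have c: "C 0 = 1 / Gamma (\<nu>+2+1)" unfolding C_def using SS_0[of "\<nu>+2"] nu by simp
      have g: "Gamma (\<nu>+2+1) = (\<nu>+2) * Gamma (\<nu>+2)" using Gamma_plus1_pos[of "\<nu>+2"] nu by simp
      have L: "\<And>a g::real. a \<noteq> 0 \<Longrightarrow> 1/g = a * (1/(a*g))" by simp
      have "\<nu>+2 \<noteq> 0" using nu by simp
      then show ?thesis unfolding b c g by (rule L)
    qed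
    have "(2*\<nu>-1) * C s \<le> (2*\<nu>-1) * C 0" using Cdec[of s] s 3 by (simp add: mult_left_mono)
    also have "\<dots> \<le> 6 * B 0 - 6 * s * C 0"
    proof -
      have "2*\<nu>-1 + 6* s \<le> 6*(\<nu>+2)" using 3 nu by (simp add: field_simps)
      then have "(2*\<nu>-1 + 6* s) * C 0 \<le> (6*(\<nu>+2)) * C 0" using C0p by (simp add: mult_right_mono)
      then show ?thesis unfolding B0 by (simp add: algebra_simps)
    qed
    also have "\<dots> \<le> 6 * B s" using Binc by simp
    finally show ?thesis .
  qed
  qed
  have "exp (c*T) * G T \<le> exp (c*0) * G 0"
  proof (rule DERIV_nonpos_imp_nonincreasing[of 0 T "\<lambda>t. exp (c*t) * G t"])
    fix s assume s: "0 \<le> s" "s \<le> T"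
    have e: "((\<lambda>t. exp (c*t)) has_real_derivative exp (c* s) * c) (at s)"
      by (auto intro!: derivative_eq_intros)
    have d: "((\<lambda>t. exp (c*t) * G t) has_real_derivative exp (c* s) * (c * G s + (-3 * B s + 2 * s * C s))) (at s)"
      using DERIV_mult[OF e dG[of s]] by (simp add: algebra_simps)
    have "(\<nu>+1) * (c * G s + (-3 * B s + 2 * s * C s)) = s * ((2*\<nu>-1) * C s - 6 * B s)"
    proof -
      have "(\<nu>+1) * c = 3" using nu unfolding c_def by (simp add: field_simps add_pos_pos less_eq_real_def)
      moreover have "(\<nu>+1) * (c * G s + (-3 * B s + 2 * s * C s)) = ((\<nu>+1) * c) * G s + (\<nu>+1)*(-3 * B s + 2 * s * C s)"
        by (simp add: algebra_simps)
      ultimately have "(\<nu>+1) * (c * G s + (-3 * B s + 2 * s * C s)) = 3 * G s + (\<nu>+1)*(-3 * B s + 2 * s * C s)"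
        by simp
      also have "\<dots> = s * ((2*\<nu>-1) * C s - 6 * B s)"
        unfolding G_def using rec[of s] by (simp add: algebra_simps)
      finally show ?thesis .
    qed
    moreover have "s * ((2*\<nu>-1) * C s - 6 * B s) \<le> 0" using key[OF s] s by (simp add: mult_nonneg_nonpos)
    ultimately have "(\<nu>+1) * (c * G s + (-3 * B s + 2 * s * C s)) \<le> 0" by simp
    moreover have "\<nu>+1 > 0" using nu by simp
    ultimately have "c * G s + (-3 * B s + 2 * s * C s) \<le> 0" by (simp add: mult_le_0_iff)
    then have "exp (c* s) * (c * G s + (-3 * B s + 2 * s * C s)) \<le> 0" by (simp add: mult_nonneg_nonpos)
    then show "\<exists>y. ((\<lambda>t. exp (c*t) * G t) has_real_derivative y) (at s) \<and> y \<le> 0" using d by blast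
  qed (use T in simp)
  then have "exp (c*T) * G T \<le> 1 / Gamma (\<nu>+1)" by (simp add: G_def A0)
  then have "G T \<le> (1 / Gamma (\<nu>+1)) / exp (c*T)"
    using pos_le_divide_eq[of "exp (c*T)" "G T" "1 / Gamma (\<nu>+1)"] by (simp add: mult.commute)
  also have "\<dots> = exp (-(c*T)) / Gamma (\<nu>+1)" by (simp add: exp_minus divide_inverse)
  finally have "G T \<le> exp (-(c*T)) / Gamma (\<nu>+1)" .
  then show ?thesis by (simp add: G_def A_def B_def c_def)
qed

theorem corollary1:
  fixes \<nu> x :: real
  assumes "\<nu> > -1" and "0 < x" and "x < alpha1 \<nu>"
  shows "dini \<nu> x \<le> x powr \<nu> * exp (- (3 * x\<^sup>2) / (4 * (\<nu> + 1))) / (2 powr \<nu> * Gamma (\<nu> + 1))"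
proof -
  define T where "T = x^2/4"
  have T0: "T \<ge> 0" by (simp add: T_def)
  have nz: "SS \<nu> t - 2*t*SS (\<nu>+1) t \<noteq> 0" if t: "0 < t" "t \<le> T" for t
  proof
    assume G0: "SS \<nu> t - 2*t*SS (\<nu>+1) t = 0"
    define y where "y = 2 * sqrt t"
    have y0: "y > 0" using t by (simp add: y_def)
    have yt: "y^2/4 = t" using t by (simp add: y_def power_mult_distrib)
    have "sqrt t \<le> sqrt T" using t by simp
    also have "sqrt T = x/2" using assms(2) by (simp add: T_def real_sqrt_divide)
    finally have yx: "y \<le> x" by (simp add: y_def)
    have "dini \<nu> y = 0" using dini_SS[OF assms(1) y0] G0 yt by simp
    then have "y \<in> {x. 0 < x \<and> dini \<nu> x = 0}" using y0 by simp
    moreover have "bdd_below {x. 0 < x \<and> dini \<nu> x = 0}" by (rule bdd_belowI[of _ 0]) auto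
    ultimately have "alpha1 \<nu> \<le> y" unfolding alpha1_def by (rule cInf_lower)
    then show False using yx assms(3) by simp
  qed
  have M: "SS \<nu> T - 2*T*SS (\<nu>+1) T \<le> exp (-(3/(\<nu>+1))*T) / Gamma (\<nu>+1)"
    by (rule main_ineq[OF assms(1) T0 nz])
  have p: "(x/2) powr \<nu> \<ge> 0" by simp
  have "dini \<nu> x = (x/2) powr \<nu> * (SS \<nu> T - 2*T*SS (\<nu>+1) T)"
    using dini_SS[OF assms(1,2)] by (simp add: T_def)
  also have "\<dots> \<le> (x/2) powr \<nu> * (exp (-(3/(\<nu>+1))*T) / Gamma (\<nu>+1))"
    by (rule mult_left_mono[OF M p])
  also have "\<dots> = x powr \<nu> * exp (- (3 * x\<^sup>2) / (4 * (\<nu> + 1))) / (2 powr \<nu> * Gamma (\<nu> + 1))"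
  proof -
    have "-(3/(\<nu>+1))*T = - (3 * x\<^sup>2) / (4 * (\<nu> + 1))" by (simp add: T_def)
    moreover have "(x/2) powr \<nu> = x powr \<nu> / 2 powr \<nu>" using assms(2) by (simp add: powr_divide)
    ultimately show ?thesis by simp
  qed
  finally show ?thesis .
qed

end
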